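(* Let $L\ge1$, $k\ge1$ be integers with $k\mid L$, let $N$ be an $L$-bit integer, $a<N$ a positive integer with $\gcd(a,N)=1$, $r$ the order of $a$ modulo $N$, $\epsilon>0$, and let $p=\lceil\log_2(2+\frac{k}{2\epsilon})\rceil$, $l_k=(k-1)\frac Lk+1$, $t_k=2L+2-l_k+p$. Let $s_0\in\{0,1,\dots,r-1\}$ be such that $2^{l_k+1}\cdot\frac{s_0}{r}$ is not an integer, and let $m_k$ be a $t_k$-bit string with $$d_{t_k}\Big(m_k,\big(\tfrac{s_0}{r}\big)_{\{l_k,2L+1+p\}}\Big)<2^p.$$ Then $(m_k)_{[1,2]}=\big(\frac{s_0}{r}\big)_{\{l_k,l_k+1\}}$ and $\big|m_k-\big(\frac{s_0}{r}\big)_{\{l_k,2L+1+p\}}\big|<2^p$.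
   Context: Bit strings are identified with the binary integers they represent (most significant bit first). For a bit string $x=x_1\cdots x_n$, $x_{[i,j]}=x_i\cdots x_j$. For real $\omega$ with binary fractional expansion $0.b_1b_2\cdots$ (not ending in infinitely many 1's), $\omega_{\{i,j\}}=b_i\cdots b_j$. For two $t$-bit strings $x,y$, $d_t(x,y)=\min(|x-y|,2^t-|x-y|)$. *)

theory Defs
  imports "HOL-Number_Theory.Number_Theory"
begin

text \<open>Bits i..j (1-indexed, most significant first) of an n-bit string x, read as a binary integer.\<close>
definition bit_substr :: "nat \<Rightarrow> nat \<Rightarrow> nat \<Rightarrow> nat \<Rightarrow> nat" where
  "bit_substr n x i j = (x div 2 ^ (n - j)) mod 2 ^ (j + 1 - i)"

text \<open>Fractional bits b_i..b_j of a nonnegative real w = 0.b1 b2 ... (expansion not ending in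
  infinitely many 1s), read as a binary integer.\<close>
definition frac_bits :: "real \<Rightarrow> nat \<Rightarrow> nat \<Rightarrow> nat" where
  "frac_bits w i j = nat \<lfloor>w * 2 ^ j\<rfloor> mod 2 ^ (j + 1 - i)"

definition dist_t :: "nat \<Rightarrow> nat \<Rightarrow> nat \<Rightarrow> int" where
  "dist_t t x y = min \<bar>int x - int y\<bar> (2 ^ t - \<bar>int x - int y\<bar>)"

end

theory Submission
  imports Defs
begin

lemma frac_nat: "frac_bits (real s / real r) i j = (s * 2^j div r) mod 2^(j+1-i)"
proof -
  have "real s / real r * 2^j = real (s * 2^j) / real r" by simp
  hence "\<lfloor>real s / real r * 2^j\<rfloor> = int (s * 2^j div r)"
    using floor_divide_of_nat_eq[of "s * 2^j" r] by simp
  thus ?thesis unfolding frac_bits_def by simp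
qed

lemma core:
  fixes m X D u q P :: nat
  assumes X: "X = q*D+u" and q: "q<4" and Pu: "P \<le> u" and uP: "u + P < D" and m: "m < 4*D"
    and d: "min \<bar>int m - int X\<bar> (4*int D - \<bar>int m - int X\<bar>) < int P"
  shows "m div D = q \<and> \<bar>int m - int X\<bar> < int P"
proof -
  have "q*D \<le> 3*D" using q by simp
  hence "int (q*D) \<le> int (3*D)" by (simp only: of_nat_le_iff)
  hence qD: "int (q*D) \<le> 3*int D" by simp
  have a: "\<bar>int m - int X\<bar> < int P"
  proof (rule ccontr)
    assume "\<not> ?thesis"
    hence "4*int D - \<bar>int m - int X\<bar> < int P" using d by linarith
    moreover have "int X = int q * int D + int u" using X by simp
    moreover have "int q * int D \<le> 3 * int D" using qD by simp
    moreover have "int q * int D \<ge> 0" by simp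
    ultimately show False using Pu uP m
      by (simp only: abs_if split: if_split_asm)
  qed
  have ix: "int X = int q*int D + int u" using X by simp
  have a2: "int X - int P < int m" "int m < int X + int P" using a by (simp_all add: abs_less_iff)
  have "int q * int D \<le> int m" using a2 ix Pu by linarith
  hence "int (q*D) \<le> int m" by simp
  hence "q*D \<le> m" by (simp only: of_nat_le_iff)
  moreover have "int m < int q * int D + int D" using a2 ix uP by linarith
  hence "int m < int (Suc q * D)" by (simp add: algebra_simps)
  hence "m < Suc q * D" by (simp only: of_nat_less_iff)
  ultimately have "m div D = q" by (intro div_nat_eqI) (simp_all add: mult.commute)
  with a show ?thesis by simp
qed

theorem lemma3:
  fixes L k N a r s0 m p lk tk :: nat and \<epsilon> :: real
  assumes "L \<ge> 1" and "k \<ge> 1" and "k dvd L"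
    and "2 ^ (L - 1) \<le> N" and "N < 2 ^ L"
    and "0 < a" and "a < N" and "coprime a N"
    and "r = ord N a"
    and "\<epsilon> > 0"
    and "p = nat \<lceil>log 2 (2 + real k / (2 * \<epsilon>))\<rceil>"
    and "lk = (k - 1) * (L div k) + 1"
    and "tk = 2 * L + 2 - lk + p"
    and "s0 < r"
    and "(2::real) ^ (lk + 1) * (real s0 / real r) \<notin> \<int>"
    and "m < 2 ^ tk"
    and "dist_t tk m (frac_bits (real s0 / real r) lk (2 * L + 1 + p)) < 2 ^ p"
  shows "bit_substr tk m 1 2 = frac_bits (real s0 / real r) lk (lk + 1)
         \<and> \<bar>int m - int (frac_bits (real s0 / real r) lk (2 * L + 1 + p))\<bar> < 2 ^ p"
proof -
  have r0: "r > 0" using assms(14) by simp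
  have "[a ^ totient N = 1] (mod N)" using assms(8) by (rule euler_theorem)
  hence "r dvd totient N" using assms(9) ord_divides by blast
  moreover have "totient N > 0" using assms(6,7) by simp
  ultimately have "r \<le> totient N" by (rule dvd_imp_le)
  also have "totient N < N" using assms(6,7) by (intro totient_less) simp
  finally have rL: "r < 2^L" using assms(5) by simp
  obtain t where t: "L = k*t" using assms(3) by blast
  have Lt: "L div k = t" using t assms(2) by simp
  hence Lk: "L div k \<ge> 1" using t assms(1) by (cases t) auto
  have "k * (L div k) = L" using assms(3) by simp
  hence "(k-1)*(L div k) + L div k = L" using assms(2) Lt t by (cases k) auto
  hence lkL: "lk \<le> L" using Lk assms(12) by linarith
  define e where "e = 2*L - lk + p"
  define D where "D = (2::nat)^e"
  define P where "P = (2::nat)^p"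
  define M where "M = s0 * 2^(lk+1)"
  define c where "c = M mod r"
  define u where "u = c * D div r"
  have tk: "tk = e + 2" using assms(13) lkL unfolding e_def by simp
  have J: "2*L+1+p = (lk+1) + e" using lkL unfolding e_def by simp
  have ndvd: "\<not> r dvd M"
  proof
    assume "r dvd M"
    then obtain t where "M = r*t" by blast
    hence "real M = real r * real t" by simp
    moreover have "(2::real) ^ (lk + 1) * (real s0 / real r) = real M / real r" unfolding M_def by simp
    ultimately have "(2::real) ^ (lk + 1) * (real s0 / real r) = real t" using r0 by simp
    thus False using assms(15) by (metis Ints_of_nat)
  qed
  have c0: "0 < c" "c < r" using ndvd r0 unfolding c_def by (auto simp: dvd_eq_mod_eq_0)
  have "D \<ge> 2^(L+p)" unfolding D_def e_def using lkL by (intro power_increasing) auto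
  moreover have "r*P < 2^L*P" using rL by (simp add: P_def)
  moreover have "2^L*P = (2::nat)^(L+p)" by (simp add: P_def power_add)
  ultimately have DrP: "D > r * P" by linarith
  have Mdec: "M = (M div r) * r + c" unfolding c_def by simp
  have F: "s0 * 2^(2*L+1+p) div r = (M div r) * D + u"
  proof -
    have "s0 * 2^(2*L+1+p) = M * D" unfolding M_def D_def J by (simp add: power_add)
    also have "\<dots> = ((M div r)*r + M mod r) * D" by (simp only: div_mult_mod_eq)
    also have "\<dots> = c * D + r * ((M div r) * D)"
    proof -
      have aux: "((x::nat)*r + y)*D = y*D + r*(x*D)" for x y by (simp add: algebra_simps)
      show ?thesis unfolding c_def by (rule aux)
    qed
    finally show ?thesis unfolding u_def using r0 by simp
  qed
  have ur: "u * r \<le> c * D" unfolding u_def using div_mult_mod_eq[of "c*D" r] by linarith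
  have "c \<le> r - 1" using c0 by simp
  hence cD: "c * D \<le> (r - 1) * D" by (rule mult_le_mono1)
  have "D \<le> r*D" using r0 by simp
  have "u * r < r * (D - P)"
  proof -
    have "(r - 1) * D = r * D - D" by (simp add: diff_mult_distrib)
    also have "\<dots> < r * D - r * P" using DrP r0
      using DrP \<open>D \<le> r*D\<close> by linarith
    also have "\<dots> = r * (D - P)" by (simp add: diff_mult_distrib2)
    finally show ?thesis using ur cD by linarith
  qed
  hence "r * u < r * (D - P)" by (simp add: mult.commute)
  hence "u < D - P" by (simp only: mult_less_cancel1)
  hence uP: "u + P < D" by linarith
  have "r * P < (u+1) * r"
  proof -
    have "c*D = (c*D div r)*r + c*D mod r" by simp
    moreover have "c*D mod r < r" using r0 by simp
    moreover have "(u+1)*r = u*r + r" by simp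
    ultimately have "c * D < (u+1) * r" unfolding u_def by linarith
    moreover have "D \<le> c * D" using c0 by simp
    ultimately show ?thesis using DrP by linarith
  qed
  hence "r * P < r * (u+1)" by (metis mult.commute)
  hence "P < u + 1" by (simp only: mult_less_cancel1)
  hence Pu: "P \<le> u" by simp
  have X: "frac_bits (real s0 / real r) lk (2 * L + 1 + p) = ((M div r) mod 4) * D + u"
  proof -
    have e2: "2 * L + 1 + p + 1 - lk = e + 2" using J by simp
    have "frac_bits (real s0 / real r) lk (2 * L + 1 + p) = ((M div r) * D + u) mod (D * 4)"
      unfolding frac_nat F e2 D_def by (simp add: power_add mult.commute)
    also have "\<dots> = D * (((M div r) * D + u) div D mod 4) + ((M div r) * D + u) mod D"
      by (rule mod_mult2_eq)
    also have "\<dots> = ((M div r) mod 4) * D + u" using uP by simp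
    finally show ?thesis .
  qed
  have fb2: "frac_bits (real s0 / real r) lk (lk + 1) = (M div r) mod 4"
    unfolding frac_nat M_def by simp
  have tk4: "(2::nat)^tk = 4 * D" unfolding tk D_def by simp
  have C: "m div D = (M div r) mod 4 \<and>
      \<bar>int m - int (frac_bits (real s0 / real r) lk (2 * L + 1 + p))\<bar> < int P"
    unfolding X
  proof (rule core[OF refl _ Pu uP])
    show "M div r mod 4 < 4" by simp
    show "m < 4 * D" using assms(16) tk4 by simp
    have "(2::int)^tk = 4 * int D" using arg_cong[OF tk4, of int] by simp
    thus "min \<bar>int m - int ((M div r) mod 4 * D + u)\<bar> (4 * int D - \<bar>int m - int ((M div r) mod 4 * D + u)\<bar>) < int P"
      using assms(17) unfolding X dist_t_def P_def by simp
  qed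
  have "bit_substr tk m 1 2 = (m div D) mod 4" unfolding bit_substr_def tk D_def by simp
  thus ?thesis using C fb2 unfolding P_def by simp
qed

end
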